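(* Let $N\ge1$ be an integer. Let $U$ be an invertible difference operator satisfying \[ \hbar\frac{\partial U}{\partial t_k} = \Lambda^kU,\qquad \frac{\partial U}{\partial x_k} = \Lambda^{kN}\frac{\partial U}{\partial s},\qquad k=1,2,\dots, \] and $\Lambda^NU = U\varphi(\Lambda)$, where $\varphi(\Lambda)=\sum_{n\ge0}\varphi_n\Lambda^n$ is a difference operator. Then for all $k=1,2,\dots$, \[ \frac{\partial\varphi(\Lambda)}{\partial t_k} = 0,\qquad \frac{\partial\varphi(\Lambda)}{\partial x_k} = \varphi(\Lambda)^k\frac{\partial\varphi(\Lambda)}{\partial s}, \] where $\partial\varphi(\Lambda)/\partial y$ denotes $\sum_{n\ge0}(\partial\varphi_n/\partial y)\Lambda^n$.
   Context: $\hbar$ is a parameter, $s$ a continuous variable, $\Lambda=e^{\hbar\partial_s}$ the shift operator $\Lambda f(s)=f(s+\hbar)$. Difference operators are formal sums $\sum_n a_n\Lambda^n$ with coefficients depending on $\hbar$, $s$, $\boldsymbol{t}=(t_k)_{k\ge1}$, $\boldsymbol{x}=(x_k)_{k\ge1}$, multiplied using $\Lambda a(s) = a(s+\hbar)\Lambda$; derivatives of operators are taken coefficientwise. *)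

theory Defs
  imports "HOL-Analysis.Analysis"
begin

text \<open>Coefficients are real functions of s, t = (t_k), x = (x_k) (hbar is a fixed real
parameter). Index 0 of t and x is unused. A difference operator sum_n a_n Lambda^n is a map
from the exponent n :: int to its coefficient.\<close>

type_synonym coef = "real \<Rightarrow> (nat \<Rightarrow> real) \<Rightarrow> (nat \<Rightarrow> real) \<Rightarrow> real"
type_synonym dop = "int \<Rightarrow> coef"

definition has_ds :: "coef \<Rightarrow> coef \<Rightarrow> bool" where
  "has_ds f g \<longleftrightarrow> (\<forall>s t x. ((\<lambda>\<sigma>. f \<sigma> t x) has_real_derivative g s t x) (at s))"

definition has_dt :: "nat \<Rightarrow> coef \<Rightarrow> coef \<Rightarrow> bool" where
  "has_dt k f g \<longleftrightarrow> (\<forall>s t x. ((\<lambda>\<tau>. f s (t(k := \<tau>)) x) has_real_derivative g s t x) (at (t k)))"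

definition has_dx :: "nat \<Rightarrow> coef \<Rightarrow> coef \<Rightarrow> bool" where
  "has_dx k f g \<longleftrightarrow> (\<forall>s t x. ((\<lambda>\<xi>. f s t (x(k := \<xi>))) has_real_derivative g s t x) (at (x k)))"

definition pds :: "coef \<Rightarrow> coef" where
  "pds f = (\<lambda>s t x. deriv (\<lambda>\<sigma>. f \<sigma> t x) s)"

definition diff_coef :: "coef \<Rightarrow> bool" where
  "diff_coef f \<longleftrightarrow>
     (\<forall>s t x. (\<lambda>\<sigma>. f \<sigma> t x) differentiable (at s)) \<and>
     (\<forall>k\<ge>1. \<forall>s t x. (\<lambda>\<tau>. f s (t(k := \<tau>)) x) differentiable (at (t k))) \<and>
     (\<forall>k\<ge>1. \<forall>s t x. (\<lambda>\<xi>. f s t (x(k := \<xi>))) differentiable (at (x k)))"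

definition bounded_below :: "dop \<Rightarrow> bool" where
  "bounded_below A \<longleftrightarrow> (\<exists>n0. \<forall>n<n0. A n = (\<lambda>_ _ _. 0))"

definition dop_ring :: "dop \<Rightarrow> bool" where
  "dop_ring A \<longleftrightarrow> bounded_below A \<and> (\<forall>n. diff_coef (A n))"

text \<open>Product, using Lambda^i a(s) = a(s + i hbar) Lambda^i.\<close>
definition dmult :: "real \<Rightarrow> dop \<Rightarrow> dop \<Rightarrow> dop" where
  "dmult h A B = (\<lambda>n s t x.
     \<Sum>i\<in>{i. A i \<noteq> (\<lambda>_ _ _. 0) \<and> B (n - i) \<noteq> (\<lambda>_ _ _. 0)}.
        A i s t x * B (n - i) (s + real_of_int i * h) t x)"

definition dop_one :: dop where
  "dop_one = (\<lambda>n _ _ _. if n = 0 then 1 else 0)"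

definition Lam :: "int \<Rightarrow> dop" where
  "Lam k = (\<lambda>n _ _ _. if n = k then 1 else 0)"

fun dpow :: "real \<Rightarrow> dop \<Rightarrow> nat \<Rightarrow> dop" where
  "dpow h A 0 = dop_one"
| "dpow h A (Suc k) = dmult h A (dpow h A k)"

definition dinvertible :: "real \<Rightarrow> dop \<Rightarrow> bool" where
  "dinvertible h U \<longleftrightarrow> (\<exists>V. dop_ring V \<and> dmult h U V = dop_one \<and> dmult h V U = dop_one)"

end

theory Submission
  imports Defs
begin


definition zb :: "int \<Rightarrow> dop \<Rightarrow> bool" where
  "zb a A \<longleftrightarrow> (\<forall>n<a. A n = (\<lambda>_ _ _. 0))"

locale dop_deriv =
  fixes D :: "coef \<Rightarrow> coef \<Rightarrow> bool"
  assumes D_unique: "D f g1 \<Longrightarrow> D f g2 \<Longrightarrow> g1 = g2"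
    and D_const: "D (\<lambda>_ _ _. c) (\<lambda>_ _ _. 0)"
    and D_add: "D f f' \<Longrightarrow> D g g' \<Longrightarrow> D (\<lambda>s t x. f s t x + g s t x) (\<lambda>s t x. f' s t x + g' s t x)"
    and D_mult: "D f f' \<Longrightarrow> D g g' \<Longrightarrow> D (\<lambda>s t x. f s t x * g s t x) (\<lambda>s t x. f' s t x * g s t x + f s t x * g' s t x)"
    and D_shift: "D f f' \<Longrightarrow> D (\<lambda>s t x. f (s + c) t x) (\<lambda>s t x. f' (s + c) t x)"

lemma dd_ds: "dop_deriv has_ds"
proof
  fix f g1 g2 assume "has_ds f g1" "has_ds f g2"
  then show "g1 = g2" unfolding has_ds_def by (intro ext) (meson DERIV_unique)
next
  fix c :: real show "has_ds (\<lambda>_ _ _. c) (\<lambda>_ _ _. 0)" unfolding has_ds_def by simp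
next
  fix f f' g g' assume "has_ds f f'" "has_ds g g'"
  then show "has_ds (\<lambda>s t x. f s t x + g s t x) (\<lambda>s t x. f' s t x + g' s t x)"
    unfolding has_ds_def by (auto intro: derivative_intros)
next
  fix f f' g g' assume "has_ds f f'" "has_ds g g'"
  then show "has_ds (\<lambda>s t x. f s t x * g s t x) (\<lambda>s t x. f' s t x * g s t x + f s t x * g' s t x)"
    unfolding has_ds_def by (auto intro!: DERIV_mult'[THEN DERIV_cong] simp: algebra_simps)
next
  fix f f' c assume "has_ds f f'"
  then show "has_ds (\<lambda>s t x. f (s + c) t x) (\<lambda>s t x. f' (s + c) t x)"
    unfolding has_ds_def
  proof (intro allI)
    fix s t x
    have "((\<lambda>\<sigma>. f \<sigma> t x) has_real_derivative f' (s + c) t x) (at (s + c))"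
      using \<open>has_ds f f'\<close> unfolding has_ds_def by blast
    then show "((\<lambda>\<sigma>. f (\<sigma> + c) t x) has_real_derivative f' (s + c) t x) (at s)"
      using DERIV_shift[of "\<lambda>\<sigma>. f \<sigma> t x"] by simp
  qed
qed

lemma dd_dt: "dop_deriv (has_dt k)"
proof
  fix f g1 g2 assume "has_dt k f g1" "has_dt k f g2"
  then show "g1 = g2" unfolding has_dt_def by (intro ext) (meson DERIV_unique)
next
  fix c :: real show "has_dt k (\<lambda>_ _ _. c) (\<lambda>_ _ _. 0)" unfolding has_dt_def by simp
next
  fix f f' g g' assume "has_dt k f f'" "has_dt k g g'"
  then show "has_dt k (\<lambda>s t x. f s t x + g s t x) (\<lambda>s t x. f' s t x + g' s t x)"
    unfolding has_dt_def by (auto intro: derivative_intros)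
next
  fix f f' g g' assume a: "has_dt k f f'" "has_dt k g g'"
  show "has_dt k (\<lambda>s t x. f s t x * g s t x) (\<lambda>s t x. f' s t x * g s t x + f s t x * g' s t x)"
    unfolding has_dt_def
  proof (intro allI)
    fix s t x
    have "((\<lambda>\<tau>. f s (t(k := \<tau>)) x * g s (t(k := \<tau>)) x) has_real_derivative
       f s (t(k := t k)) x * g' s t x + f' s t x * g s (t(k := t k)) x) (at (t k))"
      using a unfolding has_dt_def by (intro DERIV_mult') auto
    then show "((\<lambda>\<tau>. f s (t(k := \<tau>)) x * g s (t(k := \<tau>)) x) has_real_derivative
       f' s t x * g s t x + f s t x * g' s t x) (at (t k))" by (simp add: algebra_simps)
  qed
next
  fix f f' c assume "has_dt k f f'"
  then show "has_dt k (\<lambda>s t x. f (s + c) t x) (\<lambda>s t x. f' (s + c) t x)"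
    unfolding has_dt_def by blast
qed

lemma dd_dx: "dop_deriv (has_dx k)"
proof
  fix f g1 g2 assume "has_dx k f g1" "has_dx k f g2"
  then show "g1 = g2" unfolding has_dx_def by (intro ext) (meson DERIV_unique)
next
  fix c :: real show "has_dx k (\<lambda>_ _ _. c) (\<lambda>_ _ _. 0)" unfolding has_dx_def by simp
next
  fix f f' g g' assume "has_dx k f f'" "has_dx k g g'"
  then show "has_dx k (\<lambda>s t x. f s t x + g s t x) (\<lambda>s t x. f' s t x + g' s t x)"
    unfolding has_dx_def by (auto intro: derivative_intros)
next
  fix f f' g g' assume a: "has_dx k f f'" "has_dx k g g'"
  show "has_dx k (\<lambda>s t x. f s t x * g s t x) (\<lambda>s t x. f' s t x * g s t x + f s t x * g' s t x)"
    unfolding has_dx_def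
  proof (intro allI)
    fix s t x
    have "((\<lambda>\<xi>. f s t (x(k := \<xi>)) * g s t (x(k := \<xi>))) has_real_derivative
       f s t (x(k := x k)) * g' s t x + f' s t x * g s t (x(k := x k))) (at (x k))"
      using a unfolding has_dx_def by (intro DERIV_mult') auto
    then show "((\<lambda>\<xi>. f s t (x(k := \<xi>)) * g s t (x(k := \<xi>))) has_real_derivative
       f' s t x * g s t x + f s t x * g' s t x) (at (x k))" by (simp add: algebra_simps)
  qed
next
  fix f f' c assume "has_dx k f f'"
  then show "has_dx k (\<lambda>s t x. f (s + c) t x) (\<lambda>s t x. f' (s + c) t x)"
    unfolding has_dx_def by blast
qed

lemma dm_sup:
  assumes "finite S" "\<And>i. i \<notin> S \<Longrightarrow> A i = (\<lambda>_ _ _. 0) \<or> B (n - i) = (\<lambda>_ _ _. 0)"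
  shows "dmult h A B n s t x = (\<Sum>i\<in>S. A i s t x * B (n - i) (s + real_of_int i * h) t x)"
proof -
  let ?T = "{i. A i \<noteq> (\<lambda>_ _ _. 0) \<and> B (n - i) \<noteq> (\<lambda>_ _ _. 0)}"
  have sub: "?T \<subseteq> S" using assms(2) by blast
  have "dmult h A B n s t x = (\<Sum>i\<in>?T. A i s t x * B (n - i) (s + real_of_int i * h) t x)"
    unfolding dmult_def by simp
  also have "\<dots> = (\<Sum>i\<in>S. A i s t x * B (n - i) (s + real_of_int i * h) t x)"
    by (rule sum.mono_neutral_left[OF assms(1) sub]) auto
  finally show ?thesis .
qed

lemma dm_int:
  assumes "zb a A" "zb b B"
  shows "dmult h A B n s t x = (\<Sum>i\<in>{a..n-b}. A i s t x * B (n - i) (s + real_of_int i * h) t x)"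
  using assms unfolding zb_def by (intro dm_sup) auto

lemma dm_int_fun:
  assumes "zb a A" "zb b B"
  shows "dmult h A B n = (\<lambda>s t x. \<Sum>i\<in>{a..n-b}. A i s t x * B (n - i) (s + real_of_int i * h) t x)"
  using dm_int[OF assms] by (intro ext) simp

lemma zb_dmult: "zb a A \<Longrightarrow> zb b B \<Longrightarrow> zb (a + b) (dmult h A B)"
  unfolding zb_def[of "a+b"] by (auto simp: dm_int_fun)

lemma zb_mono: "zb a A \<Longrightarrow> b \<le> a \<Longrightarrow> zb b A"
  unfolding zb_def by auto

lemma Lam_left: "dmult h (Lam c) A n s t x = A (n - c) (s + real_of_int c * h) t x"
proof -
  have "dmult h (Lam c) A n s t x = (\<Sum>i\<in>{c}. Lam c i s t x * A (n - i) (s + real_of_int i * h) t x)"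
    by (rule dm_sup) (auto simp: Lam_def)
  then show ?thesis by (simp add: Lam_def)
qed

lemma one_left: "dmult h dop_one A = A"
proof (intro ext)
  fix n s t x
  have "dmult h dop_one A n s t x = (\<Sum>i\<in>{0}. dop_one i s t x * A (n - i) (s + real_of_int i * h) t x)"
    by (rule dm_sup) (auto simp: dop_one_def)
  then show "dmult h dop_one A n s t x = A n s t x" by (simp add: dop_one_def)
qed

lemma zb_Lam: "zb c (Lam c)" unfolding zb_def Lam_def by (auto intro!: ext)
lemma zb_one: "zb 0 dop_one" unfolding zb_def dop_one_def by (auto intro!: ext)
lemma zb_dpow: "zb 0 A \<Longrightarrow> zb 0 (dpow h A k)"
  by (induction k) (auto simp: zb_one dest: zb_dmult)

lemma zbD: "zb a A \<Longrightarrow> i < a \<Longrightarrow> A i = (\<lambda>_ _ _. 0)"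
  unfolding zb_def by auto

lemma dm_assoc:
  assumes A: "zb a A" and B: "zb b B" and C: "zb c C"
  shows "dmult h (dmult h A B) C = dmult h A (dmult h B C)"
proof (intro ext)
  fix n s t x
  define K where "K = \<bar>a\<bar> + \<bar>b\<bar> + \<bar>c\<bar> + \<bar>n\<bar>"
  have absb: "a \<le> \<bar>a\<bar>" "-a \<le> \<bar>a\<bar>" "b \<le> \<bar>b\<bar>" "-b \<le> \<bar>b\<bar>"
    "c \<le> \<bar>c\<bar>" "-c \<le> \<bar>c\<bar>" "n \<le> \<bar>n\<bar>" "-n \<le> \<bar>n\<bar>" by auto
  define I where "I = {-K..K}"
  define I2 where "I2 = {-2*K..2*K}"
  define f where "f i j = A i s t x * B (j - i) (s + real_of_int i * h) t x
     * C (n - j) (s + real_of_int j * h) t x" for i j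
  have AB: "zb (a+b) (dmult h A B)" and BC: "zb (b+c) (dmult h B C)" using zb_dmult A B C by auto
  have fI: "finite I" "finite I2" "I \<subseteq> I2" unfolding I_def I2_def K_def using absb by auto
  have f0: "f i j = 0" if "\<not> (i \<in> I \<and> j \<in> I)" for i j
  proof -
    have "i < a \<or> j - i < b \<or> n - j < c" using that unfolding I_def K_def using absb by (auto; linarith)
    then show ?thesis using zbD[OF A] zbD[OF B] zbD[OF C] unfolding f_def by auto
  qed
  have "dmult h (dmult h A B) C n s t x
      = (\<Sum>j\<in>I. dmult h A B j s t x * C (n-j) (s + real_of_int j * h) t x)"
  proof (rule dm_sup[OF fI(1)])
    fix j assume "j \<notin> I"
    then have "j < a + b \<or> n - j < c" unfolding I_def K_def using absb by (auto; linarith)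
    then show "dmult h A B j = (\<lambda>_ _ _. 0) \<or> C (n - j) = (\<lambda>_ _ _. 0)"
      using zbD[OF AB] zbD[OF C] by auto
  qed
  also have "\<dots> = (\<Sum>j\<in>I. \<Sum>i\<in>I2. f i j)"
  proof (rule sum.cong[OF refl])
    fix j assume j: "j \<in> I"
    have "dmult h A B j s t x = (\<Sum>i\<in>I2. A i s t x * B (j - i) (s + real_of_int i * h) t x)"
    proof (rule dm_sup[OF fI(2)])
      fix i assume "i \<notin> I2"
      then have "i < a \<or> j - i < b" using j unfolding I_def I2_def K_def using absb by (auto; linarith)
      then show "A i = (\<lambda>_ _ _. 0) \<or> B (j - i) = (\<lambda>_ _ _. 0)" using zbD[OF A] zbD[OF B] by auto
    qed
    then show "dmult h A B j s t x * C (n-j) (s + real_of_int j * h) t x = (\<Sum>i\<in>I2. f i j)"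
      by (simp add: f_def sum_distrib_right)
  qed
  also have "\<dots> = (\<Sum>j\<in>I. \<Sum>i\<in>I. f i j)"
    by (rule sum.cong[OF refl], rule sum.mono_neutral_right[OF fI(2) fI(3)]) (auto intro: f0)
  also have "\<dots> = (\<Sum>i\<in>I. \<Sum>j\<in>I. f i j)" by (rule sum.swap)
  also have "\<dots> = (\<Sum>i\<in>I. \<Sum>j\<in>I2. f i j)"
    by (rule sum.cong[OF refl], rule sum.mono_neutral_left[OF fI(2) fI(3)]) (auto intro: f0)
  also have "\<dots> = (\<Sum>i\<in>I. A i s t x * dmult h B C (n-i) (s + real_of_int i * h) t x)"
  proof (rule sum.cong[OF refl])
    fix i assume i: "i \<in> I"
    define s' where "s' = s + real_of_int i * h"
    have img: "m \<in> (\<lambda>j. j - i) ` I2 \<longleftrightarrow> m + i \<in> I2" for m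
      by (auto simp: image_iff) (metis add_diff_cancel_right')
    have "dmult h B C (n-i) s' t x = (\<Sum>m\<in>(\<lambda>j. j - i) ` I2. B m s' t x * C (n - i - m) (s' + real_of_int m * h) t x)"
    proof (rule dm_sup)
      show "finite ((\<lambda>j. j - i) ` I2)" using fI by auto
      fix m assume "m \<notin> (\<lambda>j. j - i) ` I2"
      then have "m + i \<notin> I2" using img by blast
      then have "m < b \<or> n - i - m < c" using i unfolding I_def I2_def K_def using absb by (auto; linarith)
      then show "B m = (\<lambda>_ _ _. 0) \<or> C (n - i - m) = (\<lambda>_ _ _. 0)" using zbD[OF B] zbD[OF C] by auto
    qed
    also have "\<dots> = (\<Sum>j\<in>I2. B (j - i) s' t x * C (n - i - (j - i)) (s' + real_of_int (j - i) * h) t x)"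
      by (subst sum.reindex) (auto simp: inj_on_def)
    also have "\<dots> = (\<Sum>j\<in>I2. B (j - i) s' t x * C (n - j) (s + real_of_int j * h) t x)"
      by (rule sum.cong[OF refl]) (simp add: s'_def algebra_simps)
    finally have "dmult h B C (n-i) s' t x = \<dots>" .
    then show "(\<Sum>j\<in>I2. f i j) = A i s t x * dmult h B C (n-i) (s + real_of_int i * h) t x"
      by (simp add: f_def s'_def sum_distrib_left mult.assoc)
  qed
  also have "\<dots> = dmult h A (dmult h B C) n s t x"
  proof (rule dm_sup[OF fI(1), symmetric])
    fix i assume "i \<notin> I"
    then have "i < a \<or> n - i < b + c" unfolding I_def K_def using absb by (auto; linarith)
    then show "A i = (\<lambda>_ _ _. 0) \<or> dmult h B C (n - i) = (\<lambda>_ _ _. 0)"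
      using zbD[OF A] zbD[OF BC] by auto
  qed
  finally show "dmult h (dmult h A B) C n s t x = dmult h A (dmult h B C) n s t x" .
qed


context dop_deriv begin

lemma D_sum: "finite S \<Longrightarrow> (\<forall>i\<in>S. D (f i) (g i)) \<Longrightarrow>
   D (\<lambda>s t x. \<Sum>i\<in>S. f i s t x) (\<lambda>s t x. \<Sum>i\<in>S. g i s t x)"
proof (induction S rule: finite_induct)
  case empty then show ?case using D_const[of 0] by simp
next
  case (insert j S)
  then have "D (\<lambda>s t x. f j s t x + (\<Sum>i\<in>S. f i s t x)) (\<lambda>s t x. g j s t x + (\<Sum>i\<in>S. g i s t x))"
    by (intro D_add) auto
  then show ?case using insert by simp
qed

lemma D_zb: "zb a A \<Longrightarrow> \<forall>n. D (A n) (A' n) \<Longrightarrow> zb a A'"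
  unfolding zb_def
proof (intro allI impI)
  fix n assume "\<forall>n<a. A n = (\<lambda>_ _ _. 0)" "\<forall>n. D (A n) (A' n)" "n < a"
  then have e: "A n = (\<lambda>_ _ _. 0)" by auto
  have "D (A n) (A' n)" using \<open>\<forall>n. D (A n) (A' n)\<close> by blast
  then have "D (\<lambda>_ _ _. 0) (A' n)" unfolding e .
  from D_unique[OF D_const[of 0] this] show "A' n = (\<lambda>_ _ _. 0)" by simp
qed

lemma D_dmult:
  assumes A: "zb a A" and B: "zb b B" and dA: "\<forall>i. D (A i) (A' i)" and dB: "\<forall>j. D (B j) (B' j)"
  shows "D (dmult h A B n) (\<lambda>s t x. dmult h A' B n s t x + dmult h A B' n s t x)"
proof -
  have A': "zb a A'" and B': "zb b B'" using D_zb[OF A dA] D_zb[OF B dB] by auto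
  let ?S = "{a..n-b}"
  have "D (\<lambda>s t x. \<Sum>i\<in>?S. A i s t x * B (n - i) (s + real_of_int i * h) t x)
     (\<lambda>s t x. \<Sum>i\<in>?S. A' i s t x * B (n - i) (s + real_of_int i * h) t x
         + A i s t x * B' (n - i) (s + real_of_int i * h) t x)"
  proof (rule D_sum, simp, intro ballI)
    fix i
    show "D (\<lambda>s t x. A i s t x * B (n - i) (s + real_of_int i * h) t x)
          (\<lambda>s t x. A' i s t x * B (n - i) (s + real_of_int i * h) t x
         + A i s t x * B' (n - i) (s + real_of_int i * h) t x)"
      by (rule D_mult[OF dA[rule_format] D_shift[OF dB[rule_format]]])
  qed
  moreover have "dmult h A B n = (\<lambda>s t x. \<Sum>i\<in>?S. A i s t x * B (n - i) (s + real_of_int i * h) t x)"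
    by (rule dm_int_fun[OF A B])
  moreover have "(\<lambda>s t x. dmult h A' B n s t x + dmult h A B' n s t x) =
     (\<lambda>s t x. \<Sum>i\<in>?S. A' i s t x * B (n - i) (s + real_of_int i * h) t x
         + A i s t x * B' (n - i) (s + real_of_int i * h) t x)"
    by (simp add: dm_int[OF A' B] dm_int[OF A B'] sum.distrib)
  ultimately show ?thesis by simp
qed

lemma D_Lam: "\<forall>j. D (B j) (B' j) \<Longrightarrow> D (dmult h (Lam c) B n) (dmult h (Lam c) B' n)"
proof -
  assume "\<forall>j. D (B j) (B' j)"
  then have "D (\<lambda>s t x. B (n - c) (s + real_of_int c * h) t x) (\<lambda>s t x. B' (n - c) (s + real_of_int c * h) t x)"
    using D_shift by blast
  moreover have "dmult h (Lam c) B n = (\<lambda>s t x. B (n - c) (s + real_of_int c * h) t x)"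
    "dmult h (Lam c) B' n = (\<lambda>s t x. B' (n - c) (s + real_of_int c * h) t x)"
    by (auto intro!: ext simp: Lam_left)
  ultimately show ?thesis by simp
qed

lemma D_ex_dmult:
  assumes A: "zb a A" and B: "zb b B" and dA: "\<forall>i. \<exists>g. D (A i) g" and dB: "\<forall>j. \<exists>g. D (B j) g"
  shows "\<exists>g. D (dmult h A B n) g"
proof -
  from choice[OF dA] obtain A' where a: "\<forall>i. D (A i) (A' i)" by (erule exE)
  from choice[OF dB] obtain B' where b: "\<forall>i. D (B i) (B' i)" by (erule exE)
  show ?thesis
    by (rule exI[of _ "\<lambda>s t x. dmult h A' B n s t x + dmult h A B' n s t x"], rule D_dmult[OF A B a b])
qed

lemma D_ex_Lam: "\<forall>j. \<exists>g. D (B j) g \<Longrightarrow> \<exists>g. D (dmult h (Lam c) B n) g"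
proof -
  assume "\<forall>j. \<exists>g. D (B j) g"
  from choice[OF this] obtain B' where b: "\<forall>i. D (B i) (B' i)" by (erule exE)
  show ?thesis by (rule exI[of _ "dmult h (Lam c) B' n"], rule D_Lam[OF b])
qed

end

lemma dc_ds: "diff_coef f \<Longrightarrow> has_ds f (pds f)"
  unfolding diff_coef_def has_ds_def pds_def
  by (auto simp: DERIV_deriv_iff_real_differentiable)

lemma ds_pds: "has_ds f g \<Longrightarrow> pds f = g"
  unfolding has_ds_def pds_def by (intro ext) (simp add: DERIV_imp_deriv)

lemma dc_dt: "diff_coef f \<Longrightarrow> k \<ge> 1 \<Longrightarrow> \<exists>g. has_dt k f g"
  unfolding diff_coef_def has_dt_def
  by (rule exI[of _ "\<lambda>s t x. deriv (\<lambda>\<tau>. f s (t(k:=\<tau>)) x) (t k)"])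
    (auto simp: DERIV_deriv_iff_real_differentiable)

lemma dc_dx: "diff_coef f \<Longrightarrow> k \<ge> 1 \<Longrightarrow> \<exists>g. has_dx k f g"
  unfolding diff_coef_def has_dx_def
  by (rule exI[of _ "\<lambda>s t x. deriv (\<lambda>\<xi>. f s t (x(k:=\<xi>))) (x k)"])
    (auto simp: DERIV_deriv_iff_real_differentiable)

lemma dm_scale_right:
  assumes "zb a A" "zb b B"
  shows "dmult h A (\<lambda>n s t x. c * B n s t x) n s t x = c * dmult h A B n s t x"
proof -
  have "zb b (\<lambda>n s t x. c * B n s t x)" using assms(2) unfolding zb_def by auto
  then show ?thesis by (simp add: dm_int[OF assms(1)] dm_int[OF assms] sum_distrib_left mult_ac)
qed

lemma dm_scale_left:
  assumes "zb a A" "zb b B"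
  shows "dmult h (\<lambda>n s t x. c * A n s t x) B n s t x = c * dmult h A B n s t x"
proof -
  have "zb a (\<lambda>n s t x. c * A n s t x)" using assms(1) unfolding zb_def by auto
  then show ?thesis by (simp add: dm_int[OF _ assms(2)] dm_int[OF assms] sum_distrib_left mult_ac)
qed

lemma dm_zero: "dmult h A (\<lambda>_ _ _ _. 0) = (\<lambda>_ _ _ _. 0)"
  by (intro ext, subst dm_sup[of "{}"]) auto

lemma one_right: "dmult h A dop_one = A"
proof (intro ext)
  fix n s t x
  have "dmult h A dop_one n s t x = (\<Sum>i\<in>{n}. A i s t x * dop_one (n - i) (s + real_of_int i * h) t x)"
    by (rule dm_sup) (auto simp: dop_one_def)
  then show "dmult h A dop_one n s t x = A n s t x" by (simp add: dop_one_def)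
qed

lemma Lam_Lam: "dmult h (Lam a) (dmult h (Lam b) A) = dmult h (Lam (a + b)) A"
  by (intro ext) (simp add: Lam_left algebra_simps)



theorem proposition3:
  fixes h :: real and N :: nat and U \<phi> :: dop
  assumes N: "N \<ge> 1"
    and U_ring: "dop_ring U"
    and U_inv: "dinvertible h U"
    and tflow: "\<forall>k\<ge>1. \<forall>n. \<exists>D. has_dt k (U n) D \<and>
                   (\<forall>s t x. h * D s t x = dmult h (Lam (int k)) U n s t x)"
    and xflow: "\<forall>k\<ge>1. \<forall>n. has_dx k (U n) (dmult h (Lam (int (k * N))) (\<lambda>m. pds (U m)) n)"
    and phi_pos: "\<forall>n<0. \<phi> n = (\<lambda>_ _ _. 0)"
    and intertw: "dmult h (Lam (int N)) U = dmult h U \<phi>"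
  shows "(\<forall>n. has_ds (\<phi> n) (pds (\<phi> n))) \<and>
         (\<forall>k\<ge>1. \<forall>n. has_dt k (\<phi> n) (\<lambda>_ _ _. 0) \<and>
                     has_dx k (\<phi> n) (dmult h (dpow h \<phi> k) (\<lambda>m. pds (\<phi> m)) n))"
proof -
  have "bounded_below U" using U_ring unfolding dop_ring_def by simp
  then obtain aU where "\<forall>n<aU. U n = (\<lambda>_ _ _. 0)" unfolding bounded_below_def by (erule exE)
  then have zU: "zb aU U" unfolding zb_def .
  have dU: "\<And>n. diff_coef (U n)" using U_ring unfolding dop_ring_def by simp
  obtain V where Vr: "dop_ring V" and UV: "dmult h U V = dop_one" and VU: "dmult h V U = dop_one"
    using U_inv unfolding dinvertible_def by blast
  have "bounded_below V" using Vr unfolding dop_ring_def by simp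
  then obtain aV where "\<forall>n<aV. V n = (\<lambda>_ _ _. 0)" unfolding bounded_below_def by (erule exE)
  then have zV: "zb aV V" unfolding zb_def .
  have dV: "\<And>n. diff_coef (V n)" using Vr unfolding dop_ring_def by simp
  have zphi: "zb 0 \<phi>" using phi_pos unfolding zb_def .
  have hne: "h \<noteq> 0"
  proof
    assume h0: "h = 0"
    have U0: "U m s t x = 0" for m s t x
    proof -
      have "\<exists>D. has_dt 1 (U (m+1)) D \<and> (\<forall>s t x. h * D s t x = dmult h (Lam (int 1)) U (m+1) s t x)"
        using tflow[rule_format, of 1 "m+1"] by simp
      then obtain D where "\<forall>s t x. h * D s t x = dmult h (Lam (int 1)) U (m+1) s t x" by blast
      then have "h * D s t x = dmult h (Lam (int 1)) U (m+1) s t x" by blast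
      then show ?thesis using h0 by (simp add: Lam_left)
    qed
    have "dmult h U V 0 0 (\<lambda>_. 0) (\<lambda>_. 0) = (\<Sum>i\<in>{}. U i 0 (\<lambda>_. 0) (\<lambda>_. 0) * V (0 - i) (0 + real_of_int i * h) (\<lambda>_. 0) (\<lambda>_. 0))"
      by (rule dm_sup) (auto simp: U0 fun_eq_iff)
    then have "dmult h U V 0 0 (\<lambda>_. 0) (\<lambda>_. 0) = 0" by simp
    then show False using UV by (simp add: dop_one_def)
  qed
  have cancel: "X = Y" if zX: "zb p X" and zY: "zb q Y" and e: "dmult h U X = dmult h U Y" for X Y p q
  proof -
    have "X = dmult h (dmult h V U) X" by (simp add: VU one_left)
    also have "\<dots> = dmult h V (dmult h U X)" by (rule dm_assoc[OF zV zU zX])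
    also have "\<dots> = dmult h V (dmult h U Y)" by (simp add: e)
    also have "\<dots> = dmult h (dmult h V U) Y" by (rule dm_assoc[OF zV zU zY, symmetric])
    also have "\<dots> = Y" by (simp add: VU one_left)
    finally show "X = Y" .
  qed
  define W where "W = dmult h (Lam (int N)) U"
  have zW: "zb (int N + aU) W" unfolding W_def by (rule zb_dmult[OF zb_Lam zU])
  have phiW: "\<phi> = dmult h V W"
  proof -
    have "dmult h V W = dmult h V (dmult h U \<phi>)" by (simp add: W_def intertw)
    also have "\<dots> = dmult h (dmult h V U) \<phi>" by (rule dm_assoc[OF zV zU zphi, symmetric])
    also have "\<dots> = \<phi>" by (simp add: VU one_left)
    finally show ?thesis by simp
  qed
  have ds_U: "\<forall>n. has_ds (U n) (pds (U n))"
  proof fix n show "has_ds (U n) (pds (U n))" by (rule dc_ds[OF dU]) qed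
  have ds_phi: "\<forall>n. has_ds (\<phi> n) (pds (\<phi> n))"
  proof
    fix n
    have exU: "\<forall>j. \<exists>g. has_ds (U j) g"
  proof fix j show "\<exists>g. has_ds (U j) g" by (rule exI[of _ "pds (U j)"], rule dc_ds[OF dU]) qed
    have exV: "\<forall>j. \<exists>g. has_ds (V j) g"
  proof fix j show "\<exists>g. has_ds (V j) g" by (rule exI[of _ "pds (V j)"], rule dc_ds[OF dV]) qed
    have exW: "\<forall>m. \<exists>g. has_ds (W m) g"
    proof
      fix m show "\<exists>g. has_ds (W m) g" unfolding W_def by (rule dop_deriv.D_ex_Lam[OF dd_ds]) (rule exU)
    qed
    have "\<exists>g. has_ds (\<phi> n) g" unfolding phiW by (rule dop_deriv.D_ex_dmult[OF dd_ds zV zW]) (rule exV, rule exW)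
    then obtain g where g: "has_ds (\<phi> n) g" by blast
    from ds_pds[OF g] g show "has_ds (\<phi> n) (pds (\<phi> n))" by simp
  qed
  have Pk: "dmult h (Lam (int (k * N))) U = dmult h U (dpow h \<phi> k)" for k
  proof (induction k)
    case 0
    show ?case by (auto intro!: ext simp: Lam_left one_right)
  next
    case (Suc k)
    have "dmult h (Lam (int (Suc k * N))) U = dmult h (Lam (int N)) (dmult h (Lam (int (k*N))) U)"
      by (subst Lam_Lam) (simp add: algebra_simps)
    also have "\<dots> = dmult h (Lam (int N)) (dmult h U (dpow h \<phi> k))" using Suc.IH by simp
    also have "\<dots> = dmult h (dmult h (Lam (int N)) U) (dpow h \<phi> k)"
      by (rule dm_assoc[OF zb_Lam zU zb_dpow[OF zphi], symmetric])
    also have "\<dots> = dmult h (dmult h U \<phi>) (dpow h \<phi> k)" by (simp add: intertw)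
    also have "\<dots> = dmult h U (dmult h \<phi> (dpow h \<phi> k))" by (rule dm_assoc[OF zU zphi zb_dpow[OF zphi]])
    also have "\<dots> = dmult h U (dpow h \<phi> (Suc k))" by simp
    finally show ?case .
  qed
  have tpart: "has_dt k (\<phi> n) (\<lambda>_ _ _. 0)" if k1: "k \<ge> 1" for k n
  proof -
    have "\<forall>n. \<exists>D. has_dt k (U n) D \<and> (\<forall>s t x. h * D s t x = dmult h (Lam (int k)) U n s t x)"
      using tflow[rule_format, OF k1] by blast
    from choice[OF this] obtain Ut where Ut: "\<forall>n. has_dt k (U n) (Ut n) \<and>
        (\<forall>s t x. h * Ut n s t x = dmult h (Lam (int k)) U n s t x)" by (erule exE)
    have dUt: "\<forall>n. has_dt k (U n) (Ut n)" using Ut by blast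
    have hUt: "(\<lambda>n s t x. h * Ut n s t x) = dmult h (Lam (int k)) U" using Ut by (intro ext) simp
    have zUt: "zb aU Ut" by (rule dop_deriv.D_zb[OF dd_dt zU]) (rule dUt)
    have exU: "\<forall>j. \<exists>g. has_dt k (U j) g" using dUt by blast
    have exV: "\<forall>j. \<exists>g. has_dt k (V j) g" using dc_dt[OF dV k1] by blast
    have exW: "\<forall>m. \<exists>g. has_dt k (W m) g"
    proof
      fix m show "\<exists>g. has_dt k (W m) g" unfolding W_def by (rule dop_deriv.D_ex_Lam[OF dd_dt]) (rule exU)
    qed
    have "\<forall>n. \<exists>g. has_dt k (\<phi> n) g"
    proof
      fix n show "\<exists>g. has_dt k (\<phi> n) g" unfolding phiW
        by (rule dop_deriv.D_ex_dmult[OF dd_dt zV zW]) (rule exV, rule exW)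
    qed
    from choice[OF this] obtain \<Phi> where dPhi: "\<forall>n. has_dt k (\<phi> n) (\<Phi> n)" by (erule exE)
    have zPhi: "zb 0 \<Phi>" by (rule dop_deriv.D_zb[OF dd_dt zphi]) (rule dPhi)
    have E: "dmult h (Lam (int N)) Ut m s t x = dmult h Ut \<phi> m s t x + dmult h U \<Phi> m s t x" for m s t x
    proof -
      have d1: "has_dt k (dmult h U \<phi> m) (\<lambda>s t x. dmult h Ut \<phi> m s t x + dmult h U \<Phi> m s t x)"
        by (rule dop_deriv.D_dmult[OF dd_dt zU zphi]) (rule dUt, rule dPhi)
      have d2: "has_dt k (dmult h (Lam (int N)) U m) (dmult h (Lam (int N)) Ut m)"
        by (rule dop_deriv.D_Lam[OF dd_dt]) (rule dUt)
      have "dmult h (Lam (int N)) Ut m = (\<lambda>s t x. dmult h Ut \<phi> m s t x + dmult h U \<Phi> m s t x)"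
        by (rule dop_deriv.D_unique[OF dd_dt]) (rule d2[unfolded intertw], rule d1)
      then show ?thesis by (simp add: fun_eq_iff)
    qed
    have hz: "h * dmult h U \<Phi> m s t x = 0" for m s t x
    proof -
      have a1: "h * dmult h (Lam (int N)) Ut m s t x
          = U (m - int N - int k) (s + real N * h + real k * h) t x"
        using Ut by (simp add: Lam_left)
      have "h * dmult h Ut \<phi> m s t x = dmult h (\<lambda>n s t x. h * Ut n s t x) \<phi> m s t x"
        by (rule dm_scale_left[OF zUt zphi, symmetric])
      also have "\<dots> = dmult h (dmult h (Lam (int k)) U) \<phi> m s t x" by (simp only: hUt)
      also have "\<dots> = dmult h (Lam (int k)) (dmult h U \<phi>) m s t x"
        by (simp add: dm_assoc[OF zb_Lam zU zphi])
      also have "\<dots> = U (m - int k - int N) (s + real k * h + real N * h) t x"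
        by (simp add: intertw[symmetric] Lam_left)
      finally have a2: "h * dmult h Ut \<phi> m s t x = U (m - int k - int N) (s + real k * h + real N * h) t x" .
      have i1: "m - int k - int N = m - int N - int k" by simp
      have i2: "s + real k * h + real N * h = s + real N * h + real k * h" by simp
      have "h * dmult h U \<Phi> m s t x = h * dmult h (Lam (int N)) Ut m s t x - h * dmult h Ut \<phi> m s t x"
        using E[of m s t x] by (simp add: algebra_simps)
      then show ?thesis using a1 a2 i1 i2 by simp
    qed
    have zhP: "zb 0 (\<lambda>n s t x. h * \<Phi> n s t x)" using zPhi unfolding zb_def by auto
    have z0: "zb 0 (\<lambda>_ _ _ _. 0)" unfolding zb_def by auto
    have "dmult h U (\<lambda>n s t x. h * \<Phi> n s t x) = dmult h U (\<lambda>_ _ _ _. 0)"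
      by (intro ext) (simp add: dm_scale_right[OF zU zPhi] dm_zero hz)
    then have "(\<lambda>n s t x. h * \<Phi> n s t x) = (\<lambda>_ _ _ _. 0)" by (rule cancel[OF zhP z0])
    then have e: "\<Phi> n = (\<lambda>_ _ _. 0)" using hne by (auto simp: fun_eq_iff)
    from dPhi have "has_dt k (\<phi> n) (\<Phi> n)" by blast
    then show ?thesis unfolding e .
  qed
  have xpart: "has_dx k (\<phi> n) (dmult h (dpow h \<phi> k) (\<lambda>m. pds (\<phi> m)) n)" if k1: "k \<ge> 1" for k n
  proof -
    define Us where "Us = (\<lambda>m. pds (U m))"
    define Ps where "Ps = (\<lambda>m. pds (\<phi> m))"
    have dUs: "\<forall>m. has_ds (U m) (Us m)" using ds_U unfolding Us_def .
    have dPs: "\<forall>m. has_ds (\<phi> m) (Ps m)" using ds_phi unfolding Ps_def .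
    have zUs: "zb aU Us" by (rule dop_deriv.D_zb[OF dd_ds zU]) (rule dUs)
    have zPs: "zb 0 Ps" by (rule dop_deriv.D_zb[OF dd_ds zphi]) (rule dPs)
    have E2: "dmult h (Lam (int N)) Us m s t x = dmult h Us \<phi> m s t x + dmult h U Ps m s t x" for m s t x
    proof -
      have d1: "has_ds (dmult h U \<phi> m) (\<lambda>s t x. dmult h Us \<phi> m s t x + dmult h U Ps m s t x)"
        by (rule dop_deriv.D_dmult[OF dd_ds zU zphi]) (rule dUs, rule dPs)
      have d2: "has_ds (dmult h (Lam (int N)) U m) (dmult h (Lam (int N)) Us m)"
        by (rule dop_deriv.D_Lam[OF dd_ds]) (rule dUs)
      have "dmult h (Lam (int N)) Us m = (\<lambda>s t x. dmult h Us \<phi> m s t x + dmult h U Ps m s t x)"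
        by (rule dop_deriv.D_unique[OF dd_ds]) (rule d2[unfolded intertw], rule d1)
      then show ?thesis by (simp add: fun_eq_iff)
    qed
    define Ux where "Ux = dmult h (Lam (int (k * N))) Us"
    have dUx: "\<forall>m. has_dx k (U m) (Ux m)" using xflow[rule_format, OF k1] unfolding Ux_def Us_def by blast
    have zUx: "zb (int (k*N) + aU) Ux" unfolding Ux_def by (rule zb_dmult[OF zb_Lam zUs])
    have exU: "\<forall>j. \<exists>g. has_dx k (U j) g" using dUx by blast
    have exV: "\<forall>j. \<exists>g. has_dx k (V j) g" using dc_dx[OF dV k1] by blast
    have exW: "\<forall>m. \<exists>g. has_dx k (W m) g"
    proof
      fix m show "\<exists>g. has_dx k (W m) g" unfolding W_def by (rule dop_deriv.D_ex_Lam[OF dd_dx]) (rule exU)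
    qed
    have "\<forall>n. \<exists>g. has_dx k (\<phi> n) g"
    proof
      fix n show "\<exists>g. has_dx k (\<phi> n) g" unfolding phiW
        by (rule dop_deriv.D_ex_dmult[OF dd_dx zV zW]) (rule exV, rule exW)
    qed
    from choice[OF this] obtain \<Phi> where dPhi: "\<forall>n. has_dx k (\<phi> n) (\<Phi> n)" by (erule exE)
    have zPhi: "zb 0 \<Phi>" by (rule dop_deriv.D_zb[OF dd_dx zphi]) (rule dPhi)
    have E3: "dmult h (Lam (int N)) Ux m s t x = dmult h Ux \<phi> m s t x + dmult h U \<Phi> m s t x" for m s t x
    proof -
      have d1: "has_dx k (dmult h U \<phi> m) (\<lambda>s t x. dmult h Ux \<phi> m s t x + dmult h U \<Phi> m s t x)"
        by (rule dop_deriv.D_dmult[OF dd_dx zU zphi]) (rule dUx, rule dPhi)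
      have d2: "has_dx k (dmult h (Lam (int N)) U m) (dmult h (Lam (int N)) Ux m)"
        by (rule dop_deriv.D_Lam[OF dd_dx]) (rule dUx)
      have "dmult h (Lam (int N)) Ux m = (\<lambda>s t x. dmult h Ux \<phi> m s t x + dmult h U \<Phi> m s t x)"
        by (rule dop_deriv.D_unique[OF dd_dx]) (rule d2[unfolded intertw], rule d1)
      then show ?thesis by (simp add: fun_eq_iff)
    qed
    have key: "dmult h U \<Phi> m s t x = dmult h U (dmult h (dpow h \<phi> k) Ps) m s t x" for m s t x
    proof -
      define c where "c = int (k * N)"
      have b1: "dmult h (Lam (int N)) Ux m s t x = dmult h (Lam c) (dmult h (Lam (int N)) Us) m s t x"
        unfolding Ux_def c_def by (simp add: Lam_left algebra_simps)
      have b2: "dmult h Ux \<phi> m s t x = dmult h (Lam c) (dmult h Us \<phi>) m s t x"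
        unfolding Ux_def c_def by (simp add: dm_assoc[OF zb_Lam zUs zphi])
      have "dmult h (Lam c) (dmult h U Ps) = dmult h (dmult h (Lam c) U) Ps"
        by (rule dm_assoc[OF zb_Lam zU zPs, symmetric])
      also have "\<dots> = dmult h (dmult h U (dpow h \<phi> k)) Ps" unfolding c_def Pk ..
      also have "\<dots> = dmult h U (dmult h (dpow h \<phi> k) Ps)" by (rule dm_assoc[OF zU zb_dpow[OF zphi] zPs])
      finally have b3: "dmult h (Lam c) (dmult h U Ps) m s t x = dmult h U (dmult h (dpow h \<phi> k) Ps) m s t x"
        by simp
      have b4: "dmult h (Lam c) (dmult h (Lam (int N)) Us) m s t x
          = dmult h (Lam c) (dmult h Us \<phi>) m s t x + dmult h (Lam c) (dmult h U Ps) m s t x"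
        using E2[of "m - c" "s + real_of_int c * h" t x] by (simp add: Lam_left)
      show ?thesis using E3[of m s t x] b1 b2 b3 b4 by linarith
    qed
    have "dmult h U \<Phi> = dmult h U (dmult h (dpow h \<phi> k) Ps)" using key by (intro ext)
    then have "\<Phi> = dmult h (dpow h \<phi> k) Ps"
      by (rule cancel[OF zPhi zb_dmult[OF zb_dpow[OF zphi] zPs]])
    from dPhi have "has_dx k (\<phi> n) (\<Phi> n)" by blast
    then show ?thesis unfolding Ps_def[symmetric] \<open>\<Phi> = _\<close> .
  qed
  show ?thesis
  proof (intro conjI allI impI)
    fix n show "has_ds (\<phi> n) (pds (\<phi> n))" using ds_phi by blast
  next
    fix k :: nat and n :: int assume "1 \<le> k" then show "has_dt k (\<phi> n) (\<lambda>_ _ _. 0)" by (rule tpart)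
  next
    fix k :: nat and n :: int assume "1 \<le> k" then show "has_dx k (\<phi> n) (dmult h (dpow h \<phi> k) (\<lambda>m. pds (\<phi> m)) n)" by (rule xpart)
  qed
qed

end
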